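(* Let $M(C,\bar\xi,\pi)$ be a Myller configuration with Darboux frame $(\bar\xi,\bar\mu,\bar v)$ and invariants $G,K,T$, $(T,K)\neq(0,0)$ everywhere, and suppose $C$ is a $\bar v$-helix with fixed unit axis $\bar d_v$ and constant angle $\omega$, $\langle\bar v,\bar d_v\rangle=\cos\omega$. Then, for one choice of sign, $$\bar d_v=\mp\sin\omega\frac{T}{\sqrt{T^2+K^2}}\bar\xi\pm\sin\omega\frac{K}{\sqrt{T^2+K^2}}\bar\mu+(\cos\omega)\bar v.$$
   Context: Let $C$ be a smooth curve in $E^3$ parametrized by arclength $s$; primes denote $d/ds$. A Myller configuration $M(C,\bar\xi,\pi)$ consists of a smooth unit vector field $\bar\xi$ along $C$ and a smooth oriented plane field $\pi$ with $\bar\xi\in\pi$; $\bar v$ is the unit normal of $\pi$, $\bar\mu=\bar v\times\bar\xi$, and $\bar\xi'=G\bar\mu+K\bar v$, $\bar\mu'=-G\bar\xi+T\bar v$, $\bar v'=-K\bar\xi-T\bar\mu$. $C$ is a $\bar v$-helix if there are a constant unit vector $\bar d_v$ (axis) and a constant $\omega$ with $\langle\bar v,\bar d_v\rangle=\cos\omega$ along $C$. *)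

theory Defs
  imports "HOL-Analysis.Analysis" "HOL-Analysis.Cross3"
begin

definition myller_frame ::
  "real set \<Rightarrow> (real \<Rightarrow> real^3) \<Rightarrow> (real \<Rightarrow> real^3) \<Rightarrow> (real \<Rightarrow> real^3)
   \<Rightarrow> (real \<Rightarrow> real) \<Rightarrow> (real \<Rightarrow> real) \<Rightarrow> (real \<Rightarrow> real) \<Rightarrow> bool" where
  "myller_frame I xi mu v G K T \<longleftrightarrow>
     (\<forall>s\<in>I. norm (xi s) = 1 \<and> norm (v s) = 1 \<and> xi s \<bullet> v s = 0 \<and> mu s = cross3 (v s) (xi s)) \<and>
     continuous_on I G \<and> continuous_on I K \<and> continuous_on I T \<and>
     (\<forall>s\<in>I. (xi has_vector_derivative (G s *\<^sub>R mu s + K s *\<^sub>R v s)) (at s)) \<and>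
     (\<forall>s\<in>I. (mu has_vector_derivative (- G s *\<^sub>R xi s + T s *\<^sub>R v s)) (at s)) \<and>
     (\<forall>s\<in>I. (v has_vector_derivative (- K s *\<^sub>R xi s - T s *\<^sub>R mu s)) (at s))"

definition v_helix :: "real set \<Rightarrow> (real \<Rightarrow> real^3) \<Rightarrow> real^3 \<Rightarrow> real \<Rightarrow> bool" where
  "v_helix I v d \<omega> \<longleftrightarrow> norm d = 1 \<and> (\<forall>s\<in>I. v s \<bullet> d = cos \<omega>)"

end

theory Submission
  imports Defs
begin

lemma decomp_gen:
  fixes d x v :: "real^3"
  shows "(norm (cross3 v x))\<^sup>2 *\<^sub>R d = (d \<bullet> v) *\<^sub>R cross3 x (cross3 v x) + (d \<bullet> x) *\<^sub>R cross3 (cross3 v x) v + (d \<bullet> cross3 v x) *\<^sub>R cross3 v x"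
  unfolding power2_norm_eq_inner
  by (simp add: cross3_simps power2_eq_square forall_3)

lemma ccx: fixes a b :: "real^3" shows "cross3 a (cross3 b a) = (a \<bullet> a) *\<^sub>R b - (a \<bullet> b) *\<^sub>R a"
  by (simp add: cross3_simps forall_3)

lemma ccx2: fixes a b :: "real^3" shows "cross3 (cross3 b a) b = (b \<bullet> b) *\<^sub>R a - (a \<bullet> b) *\<^sub>R b"
  by (simp add: cross3_simps forall_3)

lemma decomp:
  fixes d x v :: "real^3"
  assumes "norm x = 1" "norm v = 1" "x \<bullet> v = 0"
  shows "d = (d \<bullet> x) *\<^sub>R x + (d \<bullet> cross3 v x) *\<^sub>R cross3 v x + (d \<bullet> v) *\<^sub>R v"
proof -
  have xx: "x \<bullet> x = 1" "v \<bullet> v = 1" using assms by (simp_all add: dot_square_norm)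
  have vx: "v \<bullet> x = 0" using assms(3) by (simp add: inner_commute)
  have n: "(norm (cross3 v x))\<^sup>2 = 1"
    using norm_cross_dot[of v x] assms vx by simp
  show ?thesis using decomp_gen[of v x d] n ccx[of x v] ccx2[where a=x and b=v] xx vx assms(3)
    by (simp add: algebra_simps)
qed

lemma cancel_r:
  fixes x y r :: real
  assumes "x * (r * r) = y * r" "r > 0"
  shows "x = y / r"
proof -
  have "(x * r) * r = y * r" using assms(1) by (simp add: mult.assoc)
  then have "x * r = y" using assms(2) by simp
  then show ?thesis using assms(2) by (simp add: field_simps)
qed

lemma sqnorm:
  fixes d x m v :: "real^3"
  assumes "d = a *\<^sub>R x + b *\<^sub>R m + c *\<^sub>R v" "a = d \<bullet> x" "b = d \<bullet> m" "c = d \<bullet> v"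
  shows "d \<bullet> d = a\<^sup>2 + b\<^sup>2 + c\<^sup>2"
proof -
  have "d \<bullet> d = d \<bullet> (a *\<^sub>R x + b *\<^sub>R m + c *\<^sub>R v)" using assms(1) by simp
  also have "\<dots> = a * (d \<bullet> x) + b * (d \<bullet> m) + c * (d \<bullet> v)" by (simp add: inner_add_right)
  finally show ?thesis using assms(2-4) by (simp add: power2_eq_square)
qed

theorem corollary25:
  fixes a b :: real and xi mu v :: "real \<Rightarrow> real^3" and G K T :: "real \<Rightarrow> real"
    and d :: "real^3" and \<omega> :: real
  assumes "a < b"
    and "myller_frame {a<..<b} xi mu v G K T"
    and "\<forall>s\<in>{a<..<b}. (T s, K s) \<noteq> (0, 0)"
    and "v_helix {a<..<b} v d \<omega>"
  shows "\<exists>\<sigma>::real. (\<sigma> = 1 \<or> \<sigma> = -1) \<and>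
    (\<forall>s\<in>{a<..<b}.
       d = (- \<sigma> * sin \<omega> * T s / sqrt ((T s)\<^sup>2 + (K s)\<^sup>2)) *\<^sub>R xi s
         + (\<sigma> * sin \<omega> * K s / sqrt ((T s)\<^sup>2 + (K s)\<^sup>2)) *\<^sub>R mu s
         + cos \<omega> *\<^sub>R v s)"
proof -
  let ?I = "{a<..<b}"
  note mf = assms(2)[unfolded myller_frame_def]
  note vh = assms(4)[unfolded v_helix_def]
  define \<alpha> where "\<alpha> s = d \<bullet> xi s" for s
  define \<beta> where "\<beta> s = d \<bullet> mu s" for s
  define r where "r s = sqrt ((T s)\<^sup>2 + (K s)\<^sup>2)" for s
  have rpos: "r s > 0" if "s \<in> ?I" for s
  proof -
    have "(T s)\<^sup>2 + (K s)\<^sup>2 > 0" using assms(3) that by (auto simp: add_pos_nonneg sum_power2_gt_zero_iff)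
    then show ?thesis by (simp add: r_def)
  qed
  have rsq: "(r s)\<^sup>2 = (T s)\<^sup>2 + (K s)\<^sup>2" for s by (simp add: r_def)
  have dec: "d = \<alpha> s *\<^sub>R xi s + \<beta> s *\<^sub>R mu s + cos \<omega> *\<^sub>R v s" if "s \<in> ?I" for s
  proof -
    have "d = (d \<bullet> xi s) *\<^sub>R xi s + (d \<bullet> cross3 (v s) (xi s)) *\<^sub>R cross3 (v s) (xi s) + (d \<bullet> v s) *\<^sub>R v s"
      using decomp[of "xi s" "v s" d] mf that by auto
    moreover have "d \<bullet> v s = cos \<omega>" using vh that by (simp add: inner_commute)
    ultimately show ?thesis using mf that by (simp add: \<alpha>_def \<beta>_def)
  qed
  have nrm: "(\<alpha> s)\<^sup>2 + (\<beta> s)\<^sup>2 = (sin \<omega>)\<^sup>2" if "s \<in> ?I" for s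
  proof -
    have "d \<bullet> d = (\<alpha> s)\<^sup>2 + (\<beta> s)\<^sup>2 + (cos \<omega>)\<^sup>2"
      apply (rule sqnorm[OF dec[OF that]])
      using vh that by (auto simp: \<alpha>_def \<beta>_def inner_commute)
    moreover have "d \<bullet> d = 1" using vh by (simp add: dot_square_norm)
    ultimately show ?thesis using sin_cos_squared_add[of \<omega>] by linarith
  qed
  have lin: "K s * \<alpha> s + T s * \<beta> s = 0" if "s \<in> ?I" for s
  proof -
    have D1: "((\<lambda>t. v t \<bullet> d) has_derivative (\<lambda>h. (h *\<^sub>R (- K s *\<^sub>R xi s - T s *\<^sub>R mu s)) \<bullet> d)) (at s)"
      using mf that
      by (auto intro!: derivative_eq_intros simp: has_vector_derivative_def)
    have D2: "((\<lambda>t. v t \<bullet> d) has_derivative (\<lambda>h. 0)) (at s)"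
    proof (rule has_derivative_transform_within_open[of "\<lambda>t. cos \<omega>" _ _ _ ?I])
      show "((\<lambda>t. cos \<omega>) has_derivative (\<lambda>h. 0)) (at s)" by simp
    qed (use vh that in auto)
    have "(\<lambda>h. (h *\<^sub>R (- K s *\<^sub>R xi s - T s *\<^sub>R mu s)) \<bullet> d) = (\<lambda>h. 0)"
      using has_derivative_unique[OF D1 D2] .
    then have "(1 *\<^sub>R (- K s *\<^sub>R xi s - T s *\<^sub>R mu s)) \<bullet> d = 0" by meson
    then show ?thesis by (simp add: \<alpha>_def \<beta>_def inner_diff_left inner_commute algebra_simps)
  qed
  show ?thesis
  proof (cases "sin \<omega> = 0")
    case True
    then have "\<alpha> s = 0 \<and> \<beta> s = 0" if "s \<in> ?I" for s using nrm[OF that]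
      by (simp add: sum_power2_eq_zero_iff)
    then show ?thesis using dec True by (intro exI[of _ 1]) auto
  next
    case False
    define \<sigma> where "\<sigma> s = (\<beta> s * K s - \<alpha> s * T s) / (sin \<omega> * r s)" for s
    have sig: "\<sigma> s = 1 \<or> \<sigma> s = -1" if "s \<in> ?I" for s
    proof -
      have "(\<beta> s * K s - \<alpha> s * T s)\<^sup>2 + (K s * \<alpha> s + T s * \<beta> s)\<^sup>2 = ((\<alpha> s)\<^sup>2 + (\<beta> s)\<^sup>2) * ((T s)\<^sup>2 + (K s)\<^sup>2)"
        by (simp add: power2_eq_square algebra_simps)
      then have "(\<beta> s * K s - \<alpha> s * T s)\<^sup>2 = (sin \<omega> * r s)\<^sup>2"
        using lin[OF that] nrm[OF that] rsq[of s] by (simp add: power_mult_distrib)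
      moreover have "sin \<omega> * r s \<noteq> 0" using False rpos[OF that] by simp
      ultimately show ?thesis unfolding \<sigma>_def
        by (metis (no_types, lifting) divide_minus_left divide_self power2_eq_iff)
    qed
    have cont: "continuous_on ?I \<sigma>"
    proof -
      have cxi: "continuous_on ?I xi"
        using mf by (meson has_vector_derivative_continuous continuous_at_imp_continuous_on)
      have cmu: "continuous_on ?I mu"
        using mf by (meson has_vector_derivative_continuous continuous_at_imp_continuous_on)
      have ca: "continuous_on ?I \<alpha>" unfolding \<alpha>_def by (intro continuous_intros cxi)
      have cb: "continuous_on ?I \<beta>" unfolding \<beta>_def by (intro continuous_intros cmu)
      have cr: "continuous_on ?I r" unfolding r_def using mf by (intro continuous_intros) auto
      have rnz: "\<forall>s\<in>?I. r s \<noteq> 0" using rpos by force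
      show ?thesis unfolding \<sigma>_def using mf ca cb cr rnz False
        by (intro continuous_intros) auto
    qed
    have "\<sigma> constant_on ?I"
    proof (rule continuous_finite_range_constant[OF _ cont])
      show "connected ?I" by simp
      have "\<sigma> ` ?I \<subseteq> {1, -1}" using sig by fastforce
      then show "finite (\<sigma> ` ?I)" by (rule finite_subset) simp
    qed
    then obtain c where c: "\<forall>s\<in>?I. \<sigma> s = c" by (auto simp: constant_on_def)
    have "(a+b)/2 \<in> ?I" using assms(1) by simp
    then have c1: "c = 1 \<or> c = -1" using sig[of "(a+b)/2"] c by force
    show ?thesis
    proof (intro exI[of _ c] conjI c1 ballI)
      fix s assume s: "s \<in> ?I"
      have nz: "sin \<omega> * r s \<noteq> 0" using False rpos[OF s] by simp
      have sv: "\<beta> s * K s - \<alpha> s * T s = c * (sin \<omega> * r s)"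
        using c s nz unfolding \<sigma>_def by (metis nonzero_eq_divide_eq)
      have rr: "r s * r s = (T s)\<^sup>2 + (K s)\<^sup>2" using rsq[of s] by (simp add: power2_eq_square)
      have ea: "\<alpha> s = - c * sin \<omega> * T s / r s"
      proof -
        have "\<alpha> s * (r s * r s) = \<alpha> s * ((T s)\<^sup>2 + (K s)\<^sup>2)" using rr by simp
        also have "\<dots> = T s * (\<alpha> s * T s - \<beta> s * K s) + K s * (K s * \<alpha> s + T s * \<beta> s)"
          by (simp add: power2_eq_square algebra_simps)
        also have "\<dots> = T s * (\<alpha> s * T s - \<beta> s * K s)" using lin[OF s] by simp
        also have "\<dots> = - T s * (c * (sin \<omega> * r s))" using sv by (simp add: algebra_simps)
        finally have "\<alpha> s * (r s * r s) = - T s * (c * (sin \<omega> * r s))" .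
        then have "\<alpha> s * (r s * r s) = (- c * sin \<omega> * T s) * r s" by (simp add: algebra_simps)
        then show ?thesis by (rule cancel_r[OF _ rpos[OF s]])
      qed
      have eb: "\<beta> s = c * sin \<omega> * K s / r s"
      proof -
        have "\<beta> s * (r s * r s) = \<beta> s * ((T s)\<^sup>2 + (K s)\<^sup>2)" using rr by simp
        also have "\<dots> = K s * (\<beta> s * K s - \<alpha> s * T s) + T s * (K s * \<alpha> s + T s * \<beta> s)"
          by (simp add: power2_eq_square algebra_simps)
        also have "\<dots> = K s * (\<beta> s * K s - \<alpha> s * T s)" using lin[OF s] by simp
        also have "\<dots> = K s * (c * (sin \<omega> * r s))" using sv by simp
        finally have "\<beta> s * (r s * r s) = K s * (c * (sin \<omega> * r s))" .
        then have "\<beta> s * (r s * r s) = (c * sin \<omega> * K s) * r s" by (simp add: algebra_simps)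
        then show ?thesis by (rule cancel_r[OF _ rpos[OF s]])
      qed
      show "d = (- c * sin \<omega> * T s / sqrt ((T s)\<^sup>2 + (K s)\<^sup>2)) *\<^sub>R xi s
         + (c * sin \<omega> * K s / sqrt ((T s)\<^sup>2 + (K s)\<^sup>2)) *\<^sub>R mu s
         + cos \<omega> *\<^sub>R v s"
        using dec[OF s] ea eb by (simp add: r_def)
    qed
  qed
qed

end
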